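(* Let $\ell, n_1,\dots,n_\ell$ be positive integers, let $K_1,\dots,K_\ell$ be finite fields with a common finite extension field $\mathbb{F}$, and let $n=n_1+\cdots+n_\ell$. Let $\mathcal{C}\subseteq\mathbb{F}^n$ be an $\mathbb{F}$-linear code of dimension $k\geq 1$ with generator matrix $\mathbf{G}$ (a $k\times n$ matrix over $\mathbb{F}$). Then $\mathcal{C}$ is MSRD if and only if $\mathbf{G}\mathbf{A}$ is invertible for every $n\times k$ matrix $\mathbf{A}$ of rank $k$ of the block-diagonal form $\mathbf{A}=\mathrm{diag}(\mathbf{A}_1,\dots,\mathbf{A}_\ell)$, where each $\mathbf{A}_i$ is an $n_i\times k_i$ matrix with entries in $K_i$, $k_i\leq n_i$, and $\sum_{i=1}^{\ell}k_i=k$.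
   Context: Write vectors $\mathbf{c}\in\mathbb{F}^n$ as $\mathbf{c}=(\mathbf{c}^{(1)},\dots,\mathbf{c}^{(\ell)})$ with $\mathbf{c}^{(i)}\in\mathbb{F}^{n_i}$. Fix for each $i$ an ordered basis of $\mathbb{F}$ over $K_i$ (with $m_i=[\mathbb{F}:K_i]$), and let $\Gamma_i(\mathbf{c}^{(i)})$ be the $m_i\times n_i$ matrix over $K_i$ whose $j$-th column is the coordinate vector of the $j$-th entry of $\mathbf{c}^{(i)}$ with respect to this basis. The sum-rank weight of $\mathbf{c}$ is $\mathrm{srank}(\mathbf{c})=\sum_{i=1}^\ell \mathrm{rank}_{K_i}(\Gamma_i(\mathbf{c}^{(i)}))$ (independent of the chosen bases). The minimum sum-rank distance of $\mathcal{C}$ is $d=\min\{\mathrm{srank}(\mathbf{c}):\mathbf{c}\in\mathcal{C},\ \mathbf{c}\neq 0\}$, and $\mathcal{C}$ is called MSRD (maximum sum-rank distance) if $d=n-k+1$. *)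

theory Defs
  imports "Jordan_Normal_Form.DL_Rank_Submatrix"
begin

text \<open>A subfield K of the ambient (finite) field 'a; 'a is a common extension of all K_i.\<close>
definition is_subfield :: "'a::field set \<Rightarrow> bool" where
  "is_subfield K \<longleftrightarrow> 0 \<in> K \<and> 1 \<in> K \<and>
     (\<forall>x\<in>K. \<forall>y\<in>K. x + y \<in> K \<and> x * y \<in> K) \<and>
     (\<forall>x\<in>K. - x \<in> K \<and> inverse x \<in> K)"

definition offs :: "(nat \<Rightarrow> nat) \<Rightarrow> nat \<Rightarrow> nat" where
  "offs nn i = (\<Sum>j<i. nn j)"

definition lin_indep_over :: "'a::field set \<Rightarrow> (nat \<Rightarrow> 'a) \<Rightarrow> nat set \<Rightarrow> bool" where
  "lin_indep_over K f J \<longleftrightarrow>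
     (\<forall>a. (\<forall>j\<in>J. a j \<in> K) \<and> (\<Sum>j\<in>J. a j * f j) = 0 \<longrightarrow> (\<forall>j\<in>J. a j = 0))"

text \<open>rank_K of Gamma(x_0,...,x_{m-1}): the maximal number of K-linearly independent
  columns; the j-th column is the coordinate vector of x_j over K, and the coordinate map
  is a K-linear isomorphism, so columns are independent iff the entries are.\<close>
definition rank_over :: "'a::field set \<Rightarrow> (nat \<Rightarrow> 'a) \<Rightarrow> nat \<Rightarrow> nat" where
  "rank_over K f m = Max {card J | J. J \<subseteq> {..<m} \<and> lin_indep_over K f J}"

definition srank :: "nat \<Rightarrow> (nat \<Rightarrow> nat) \<Rightarrow> (nat \<Rightarrow> 'a::field set) \<Rightarrow> 'a vec \<Rightarrow> nat" where
  "srank l nn K c = (\<Sum>i<l. rank_over (K i) (\<lambda>j. c $ (offs nn i + j)) (nn i))"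

definition min_srank_dist :: "nat \<Rightarrow> (nat \<Rightarrow> nat) \<Rightarrow> (nat \<Rightarrow> 'a::field set) \<Rightarrow> nat \<Rightarrow> 'a vec set \<Rightarrow> nat" where
  "min_srank_dist l nn K n C = Min {srank l nn K c | c. c \<in> C \<and> c \<noteq> 0\<^sub>v n}"

definition MSRD :: "nat \<Rightarrow> (nat \<Rightarrow> nat) \<Rightarrow> (nat \<Rightarrow> 'a::field set) \<Rightarrow> nat \<Rightarrow> nat \<Rightarrow> 'a vec set \<Rightarrow> bool" where
  "MSRD l nn K n k C \<longleftrightarrow> min_srank_dist l nn K n C = n - k + 1"

definition block_diag :: "nat \<Rightarrow> (nat \<Rightarrow> nat) \<Rightarrow> (nat \<Rightarrow> nat) \<Rightarrow> (nat \<Rightarrow> 'a::zero mat) \<Rightarrow> 'a mat" where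
  "block_diag l nn ks B = mat (offs nn l) (offs ks l) (\<lambda>(r, c).
     (let P = (\<lambda>i. i < l \<and> offs nn i \<le> r \<and> r < offs nn (Suc i) \<and> offs ks i \<le> c \<and> c < offs ks (Suc i))
      in if \<exists>i. P i then (let i = (SOME i. P i) in B i $$ (r - offs nn i, c - offs ks i)) else 0))"

end

theory Submission
  imports Defs
begin

lemma offs_Suc: "offs nn (Suc i) = offs nn i + nn i" by (simp add: offs_def)

lemma offs_mono: "i \<le> j \<Longrightarrow> offs nn i \<le> offs nn j"
  unfolding offs_def by (rule sum_mono2) auto

lemma offs_unique:
  assumes "r < nn i" "r' < nn i'" "offs nn i + r = offs nn i' + r'"
  shows "i = i' \<and> r = r'"
proof -
  have "\<not> i < i'"
  proof
    assume "i < i'"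
    then have "offs nn (Suc i) \<le> offs nn i'" by (intro offs_mono) simp
    then show False using assms by (simp add: offs_Suc)
  qed
  moreover have "\<not> i' < i"
  proof
    assume "i' < i"
    then have "offs nn (Suc i') \<le> offs nn i" by (intro offs_mono) simp
    then show False using assms by (simp add: offs_Suc)
  qed
  ultimately show ?thesis using assms by auto
qed

lemma offs_decomp: "s < offs nn l \<Longrightarrow> \<exists>i<l. \<exists>r<nn i. s = offs nn i + r"
proof (induction l)
  case 0 then show ?case by (simp add: offs_def)
next
  case (Suc l)
  show ?case
  proof (cases "s < offs nn l")
    case True then show ?thesis using Suc by (meson less_SucI)
  next
    case False
    then show ?thesis using Suc.prems by (intro exI[of _ l]) (auto simp: offs_Suc intro: exI[of _ "s - offs nn l"])
  qed
qed

lemma sum_add_split: "(\<Sum>s<(a::nat)+b. g s) = (\<Sum>s<a. g s) + (\<Sum>r<b. (g (a + r)::'b::comm_monoid_add))"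
  by (induction b) (auto simp: add.assoc)

lemma sum_offs: "(\<Sum>s<offs nn l. g s) = (\<Sum>i<l. \<Sum>r<nn i. (g (offs nn i + r)::'b::comm_monoid_add))"
  by (induction l arbitrary: g) (auto simp: offs_Suc sum_add_split offs_def[of nn 0])

lemma offs_lt: "i < l \<Longrightarrow> r < nn i \<Longrightarrow> offs nn i + r < offs nn l"
  using offs_mono[of "Suc i" l nn] by (simp add: offs_Suc)

lemma bd_entry:
  assumes "i < l" "r < nn i" "i' < l" "t < ks i'"
  shows "block_diag l nn ks B $$ (offs nn i + r, offs ks i' + t) = (if i = i' then B i $$ (r,t) else 0)"
proof -
  let ?r = "offs nn i + r" and ?c = "offs ks i' + t"
  let ?P = "\<lambda>j. j < l \<and> offs nn j \<le> ?r \<and> ?r < offs nn (Suc j) \<and> offs ks j \<le> ?c \<and> ?c < offs ks (Suc j)"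
  have P: "?P j \<longleftrightarrow> j = i \<and> j = i'" for j
  proof
    assume h: "?P j"
    have "j = i" using offs_unique[of "?r - offs nn j" nn j r i] h assms by (auto simp: offs_Suc)
    moreover have "j = i'" using offs_unique[of "?c - offs ks j" ks j t i'] h assms by (auto simp: offs_Suc)
    ultimately show "j = i \<and> j = i'" by simp
  next
    assume "j = i \<and> j = i'" then show "?P j" using assms by (auto simp: offs_Suc)
  qed
  have dims: "?r < offs nn l" "?c < offs ks l" using assms offs_lt by auto
  show ?thesis
  proof (cases "i = i'")
    case True
    have "(SOME j. ?P j) = i" using P True by simp
    then show ?thesis unfolding block_diag_def using dims P True by (simp add: Let_def)
  next
    case False
    then show ?thesis unfolding block_diag_def using dims P by (simp add: Let_def)
  qed
qed

lemma bd_carrier: "block_diag l nn ks B \<in> carrier_mat (offs nn l) (offs ks l)"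
  unfolding block_diag_def by simp

lemma bd_mult_vec:
  assumes "i < l" "r < nn i" "W \<in> carrier_vec (offs ks l)"
  shows "(block_diag l nn ks B *\<^sub>v W) $ (offs nn i + r) = (\<Sum>t<ks i. B i $$ (r,t) * W $ (offs ks i + t))"
proof -
  have "(block_diag l nn ks B *\<^sub>v W) $ (offs nn i + r) = (\<Sum>s<offs ks l. block_diag l nn ks B $$ (offs nn i + r, s) * W $ s)"
    using assms offs_lt[of i l _ nn] offs_lt[of i l _ ks] bd_carrier[of l nn ks B]
    by (auto simp: scalar_prod_def atLeast0LessThan)
  also have "\<dots> = (\<Sum>i'<l. \<Sum>t<ks i'. block_diag l nn ks B $$ (offs nn i + r, offs ks i' + t) * W $ (offs ks i' + t))"
    by (rule sum_offs)
  also have "\<dots> = (\<Sum>i'<l. if i = i' then (\<Sum>t<ks i. B i $$ (r,t) * W $ (offs ks i + t)) else 0)"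
    using assms by (intro sum.cong refl) (auto simp: bd_entry)
  also have "\<dots> = (\<Sum>t<ks i. B i $$ (r,t) * W $ (offs ks i + t))" using assms by simp
  finally show ?thesis .
qed

lemma bd_tmult_vec:
  assumes "i < l" "t < ks i" "c \<in> carrier_vec (offs nn l)"
  shows "(transpose_mat (block_diag l nn ks B) *\<^sub>v c) $ (offs ks i + t) = (\<Sum>r<nn i. B i $$ (r,t) * c $ (offs nn i + r))"
proof -
  have "(transpose_mat (block_diag l nn ks B) *\<^sub>v c) $ (offs ks i + t) = (\<Sum>s<offs nn l. block_diag l nn ks B $$ (s, offs ks i + t) * c $ s)"
    using assms offs_lt[of i l _ nn] offs_lt[of i l _ ks] bd_carrier[of l nn ks B]
    by (auto simp: scalar_prod_def atLeast0LessThan)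
  also have "\<dots> = (\<Sum>i'<l. \<Sum>r<nn i'. block_diag l nn ks B $$ (offs nn i' + r, offs ks i + t) * c $ (offs nn i' + r))"
    by (rule sum_offs)
  also have "\<dots> = (\<Sum>i'<l. if i' = i then (\<Sum>r<nn i. B i $$ (r,t) * c $ (offs nn i + r)) else 0)"
    using assms by (intro sum.cong refl) (auto simp: bd_entry)
  also have "\<dots> = (\<Sum>r<nn i. B i $$ (r,t) * c $ (offs nn i + r))" using assms by simp
  finally show ?thesis .
qed

lemma sf_0: "is_subfield K \<Longrightarrow> 0 \<in> K" and sf_1: "is_subfield K \<Longrightarrow> 1 \<in> K"
  and sf_add: "is_subfield K \<Longrightarrow> x \<in> K \<Longrightarrow> y \<in> K \<Longrightarrow> x + y \<in> K"
  and sf_mult: "is_subfield K \<Longrightarrow> x \<in> K \<Longrightarrow> y \<in> K \<Longrightarrow> x * y \<in> K"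
  and sf_uminus: "is_subfield K \<Longrightarrow> x \<in> K \<Longrightarrow> - x \<in> K"
  and sf_inverse: "is_subfield K \<Longrightarrow> x \<in> K \<Longrightarrow> inverse x \<in> K"
  by (auto simp: is_subfield_def)

lemma sf_divide: "is_subfield K \<Longrightarrow> x \<in> K \<Longrightarrow> y \<in> K \<Longrightarrow> x / y \<in> K"
  by (simp add: divide_inverse sf_mult sf_inverse)

lemma sf_sum: assumes "is_subfield K" "\<forall>x\<in>A. f x \<in> K" shows "sum f A \<in> K"
proof (cases "finite A")
  case True
  then show ?thesis using assms(2)
    by (induction A rule: finite_induct) (auto intro: sf_add[OF assms(1)] sf_0[OF assms(1)])
next
  case False then show ?thesis using sf_0[OF assms(1)] by simp
qed

definition indep_set :: "'a::field set \<Rightarrow> 'a set \<Rightarrow> bool" where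
  "indep_set K S \<longleftrightarrow> (\<forall>\<mu>. (\<forall>b\<in>S. \<mu> b \<in> K) \<and> (\<Sum>b\<in>S. \<mu> b * b) = 0 \<longrightarrow> (\<forall>b\<in>S. \<mu> b = 0))"

lemma basis_exists:
  fixes K :: "'a::{finite,field} set"
  assumes sf: "is_subfield K"
  shows "\<exists>S. indep_set K S \<and> (\<forall>x. \<exists>\<mu>. (\<forall>b\<in>S. \<mu> b \<in> K) \<and> x = (\<Sum>b\<in>S. \<mu> b * b))"
proof -
  have "indep_set K {}" unfolding indep_set_def by simp
  then obtain S where "finite S" and mx: "maximal S (indep_set K)"
    using maximal_exists_superset[of "UNIV::'a set" "indep_set K" "{}"] by auto
  have ind: "indep_set K S" using mx by (simp add: maximal_def)
  have "\<exists>\<mu>. (\<forall>b\<in>S. \<mu> b \<in> K) \<and> x = (\<Sum>b\<in>S. \<mu> b * b)" for x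
  proof (cases "x \<in> S")
    case True
    have "(\<Sum>b\<in>S. (if b = x then 1 else 0) * b) = (\<Sum>b\<in>S. if b = x then x else 0)"
      by (rule sum.cong) auto
    also have "\<dots> = x" using True \<open>finite S\<close> by simp
    finally show ?thesis using sf_0[OF sf] sf_1[OF sf]
      by (intro exI[of _ "\<lambda>b. if b = x then 1 else 0"]) auto
  next
    case False
    have "\<not> indep_set K (insert x S)"
      using mx False unfolding maximal_def by blast
    then obtain \<mu> where mu: "\<forall>b\<in>insert x S. \<mu> b \<in> K" "(\<Sum>b\<in>insert x S. \<mu> b * b) = 0"
      and nz: "\<exists>b\<in>insert x S. \<mu> b \<noteq> 0"
      unfolding indep_set_def by blast
    have sum: "\<mu> x * x + (\<Sum>b\<in>S. \<mu> b * b) = 0" using mu(2) False \<open>finite S\<close> by simp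
    have mx0: "\<mu> x \<noteq> 0"
    proof
      assume "\<mu> x = 0"
      then have "(\<Sum>b\<in>S. \<mu> b * b) = 0" using sum by simp
      then have "\<forall>b\<in>S. \<mu> b = 0" using ind mu(1) unfolding indep_set_def by blast
      then show False using nz \<open>\<mu> x = 0\<close> by auto
    qed
    show ?thesis
    proof (rule exI[of _ "\<lambda>b. - \<mu> b / \<mu> x"], intro conjI)
      show "\<forall>b\<in>S. - \<mu> b / \<mu> x \<in> K" using mu(1) by (auto intro!: sf_divide sf_uminus sf)
      have "(\<Sum>b\<in>S. - \<mu> b / \<mu> x * b) = - (\<Sum>b\<in>S. \<mu> b * b) / \<mu> x"
        by (simp add: sum_divide_distrib sum_negf)
      also have "\<dots> = x"
      proof -
        have "\<mu> x * x = - (\<Sum>b\<in>S. \<mu> b * b)" using sum by (simp add: eq_neg_iff_add_eq_0)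
        then show ?thesis using mx0 by (metis nonzero_mult_div_cancel_left)
      qed
      finally show "x = (\<Sum>b\<in>S. - \<mu> b / \<mu> x * b)" by simp
    qed
  qed
  then show ?thesis using ind by blast
qed

lemma K_indep_imp_F_indep:
  fixes v :: "'b \<Rightarrow> nat \<Rightarrow> 'a::{finite,field}"
  assumes sf: "is_subfield K" and fin: "finite T" and vK: "\<forall>t\<in>T. \<forall>r<m. v t r \<in> K"
    and ind: "\<forall>\<beta>. (\<forall>t\<in>T. \<beta> t \<in> K) \<and> (\<forall>r<m. (\<Sum>t\<in>T. \<beta> t * v t r) = 0) \<longrightarrow> (\<forall>t\<in>T. \<beta> t = 0)"
    and rel: "\<forall>r<m. (\<Sum>t\<in>T. \<alpha> t * v t r) = 0"
  shows "\<forall>t\<in>T. \<alpha> t = 0"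
proof -
  obtain S where indS: "indep_set K S" and sp: "\<forall>x. \<exists>\<mu>. (\<forall>b\<in>S. \<mu> b \<in> K) \<and> x = (\<Sum>b\<in>S. \<mu> b * b)"
    using basis_exists[OF sf] by blast
  obtain M where M: "\<And>x. (\<forall>b\<in>S. M x b \<in> K) \<and> x = (\<Sum>b\<in>S. M x b * b)"
    using sp by metis
  have M1: "\<And>x b. b \<in> S \<Longrightarrow> M x b \<in> K" and M2: "\<And>x. x = (\<Sum>b\<in>S. M x b * b)"
    using M by blast+
  have zero: "\<forall>t\<in>T. M (\<alpha> t) b = 0" if "b \<in> S" for b
  proof -
    have "(\<Sum>t\<in>T. M (\<alpha> t) b * v t r) = 0" if r: "r < m" for r
    proof -
      have "0 = (\<Sum>t\<in>T. \<alpha> t * v t r)" using rel r by simp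
      also have "\<dots> = (\<Sum>t\<in>T. (\<Sum>b\<in>S. M (\<alpha> t) b * b) * v t r)"
        by (rule sum.cong[OF refl]) (subst M2[of "\<alpha> _"], rule refl)
      also have "\<dots> = (\<Sum>b\<in>S. (\<Sum>t\<in>T. M (\<alpha> t) b * v t r) * b)"
        by (simp add: sum_distrib_right sum_distrib_left mult_ac) (rule sum.swap)
      finally have "(\<Sum>b\<in>S. (\<Sum>t\<in>T. M (\<alpha> t) b * v t r) * b) = 0" by simp
      moreover have "\<forall>b\<in>S. (\<Sum>t\<in>T. M (\<alpha> t) b * v t r) \<in> K"
        using M1 vK r by (auto intro!: sf_sum sf_mult sf)
      ultimately show ?thesis
        using indS[unfolded indep_set_def, THEN spec[of _ "\<lambda>b'. \<Sum>t\<in>T. M (\<alpha> t) b' * v t r"]] \<open>b \<in> S\<close>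
        by blast
    qed
    then show ?thesis using ind[THEN spec[of _ "\<lambda>t. M (\<alpha> t) b"]] M1 \<open>b \<in> S\<close> by blast
  qed
  show ?thesis
  proof
    fix t assume "t \<in> T"
    have "\<alpha> t = (\<Sum>b\<in>S. M (\<alpha> t) b * b)" by (rule M2)
    also have "\<dots> = 0" using zero \<open>t \<in> T\<close> by simp
    finally show "\<alpha> t = 0" .
  qed
qed

lemma dependent_exists:
  fixes v :: "'b \<Rightarrow> nat \<Rightarrow> 'a::field"
  assumes fin: "finite T" and gt: "card T > m"
  shows "\<exists>\<alpha>. (\<forall>r<m. (\<Sum>t\<in>T. \<alpha> t * v t r) = 0) \<and> (\<exists>t\<in>T. \<alpha> t \<noteq> 0)"
proof -
  define p where "p = card T"
  obtain h where h: "bij_betw h {0..<p} T" using ex_bij_betw_nat_finite[OF fin] p_def by blast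
  define M where "M = mat p p (\<lambda>(r,s). if r < m then v (h s) r else (0::'a))"
  have M: "M \<in> carrier_mat p p" by (simp add: M_def)
  have p0: "p - 1 < p" "m \<le> p - 1" using gt p_def by auto
  have "transpose_mat M *\<^sub>v unit_vec p (p - 1) = 0\<^sub>v p"
    using p0 by (intro eq_vecI) (auto simp: M_def scalar_prod_def unit_vec_def)
  moreover have "unit_vec p (p - 1) \<noteq> 0\<^sub>v p"
    using p0 by (metis index_unit_vec(1) index_zero_vec(1) one_neq_zero)
  ultimately have "\<exists>v. v \<in> carrier_vec p \<and> v \<noteq> 0\<^sub>v p \<and> transpose_mat M *\<^sub>v v = 0\<^sub>v p"
    using unit_vec_carrier by blast
  then have "det (transpose_mat M) = 0"
    using det_0_iff_vec_prod_zero_field[of "transpose_mat M" p] M by auto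
  then have "det M = 0" using det_transpose[OF M] by simp
  then obtain w where w: "w \<in> carrier_vec p" "w \<noteq> 0\<^sub>v p" "M *\<^sub>v w = 0\<^sub>v p"
    using det_0_iff_vec_prod_zero_field[OF M] by auto
  define \<alpha> where "\<alpha> t = w $ (the_inv_into {0..<p} h t)" for t
  have ah: "\<alpha> (h s) = w $ s" if "s < p" for s
    using h that unfolding \<alpha>_def by (simp add: bij_betw_def the_inv_into_f_f)
  have "(\<Sum>t\<in>T. \<alpha> t * v t r) = 0" if r: "r < m" for r
  proof -
    have "(\<Sum>t\<in>T. \<alpha> t * v t r) = (\<Sum>s\<in>{0..<p}. \<alpha> (h s) * v (h s) r)"
      using sum.reindex_bij_betw[OF h, of "\<lambda>t. \<alpha> t * v t r"] by simp
    also have "\<dots> = (M *\<^sub>v w) $ r"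
      using r p0 w(1) by (auto simp: M_def scalar_prod_def ah mult.commute intro!: sum.cong)
    also have "\<dots> = 0" using w(3) r p0 by simp
    finally show ?thesis .
  qed
  moreover have "\<exists>t\<in>T. \<alpha> t \<noteq> 0"
  proof (rule ccontr)
    assume "\<not> ?thesis"
    then have "w $ s = 0" if "s < p" for s using ah[OF that] h that by (auto simp: bij_betw_def)
    then have "w = 0\<^sub>v p" using w(1) by (intro eq_vecI) auto
    then show False using w(2) by simp
  qed
  ultimately show ?thesis by blast
qed

lemma count_K_indep:
  fixes v :: "'b \<Rightarrow> nat \<Rightarrow> 'a::{finite,field}"
  assumes sf: "is_subfield K" and fin: "finite T" and vK: "\<forall>t\<in>T. \<forall>r<m. v t r \<in> K"
    and ind: "\<forall>\<beta>. (\<forall>t\<in>T. \<beta> t \<in> K) \<and> (\<forall>r<m. (\<Sum>t\<in>T. \<beta> t * v t r) = 0) \<longrightarrow> (\<forall>t\<in>T. \<beta> t = 0)"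
  shows "card T \<le> m"
proof (rule ccontr)
  assume "\<not> card T \<le> m"
  then obtain \<alpha> where "\<forall>r<m. (\<Sum>t\<in>T. \<alpha> t * v t r) = 0" "\<exists>t\<in>T. \<alpha> t \<noteq> 0"
    using dependent_exists[OF fin, of m v] by auto
  then show False using K_indep_imp_F_indep[OF sf fin vK ind] by blast
qed

lemma ro_set_finite: "finite {card J | J. J \<subseteq> {..<m} \<and> lin_indep_over K f J}"
proof (rule finite_subset[of _ "{..m}"])
  show "{card J | J. J \<subseteq> {..<m} \<and> lin_indep_over K f J} \<subseteq> {..m}"
  proof
    fix x assume "x \<in> {card J | J. J \<subseteq> {..<m} \<and> lin_indep_over K f J}"
    then obtain J where "x = card J" "J \<subseteq> {..<m}" by blast
    moreover have "card J \<le> card {..<m}" using \<open>J \<subseteq> {..<m}\<close> by (intro card_mono) simp_all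
    ultimately show "x \<in> {..m}" by simp
  qed
qed simp

lemma ro_attained: "\<exists>J. J \<subseteq> {..<m} \<and> lin_indep_over K f J \<and> card J = rank_over K f m"
proof -
  have "lin_indep_over K f {}" by (simp add: lin_indep_over_def)
  then have ne: "{card J | J. J \<subseteq> {..<m} \<and> lin_indep_over K f J} \<noteq> {}" by blast
  show ?thesis using Max_in[OF ro_set_finite ne] unfolding rank_over_def by auto
qed

lemma ro_ge: "J \<subseteq> {..<m} \<Longrightarrow> lin_indep_over K f J \<Longrightarrow> card J \<le> rank_over K f m"
  unfolding rank_over_def by (rule Max_ge[OF ro_set_finite]) blast

lemma ro_le_m: "rank_over K f m \<le> m"
proof -
  obtain J where J: "J \<subseteq> {..<m}" "card J = rank_over K f m" using ro_attained by blast
  have "card J \<le> card {..<m}" using J(1) by (intro card_mono) simp_all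
  then show ?thesis using J(2) by simp
qed

lemma ro_le_nz:
  assumes sf: "is_subfield K"
  shows "rank_over K f m \<le> card {j. j < m \<and> f j \<noteq> 0}"
proof -
  obtain J where J: "J \<subseteq> {..<m}" "lin_indep_over K f J" "card J = rank_over K f m"
    using ro_attained by blast
  have "J \<subseteq> {j. j < m \<and> f j \<noteq> 0}"
  proof
    fix j assume j: "j \<in> J"
    have "f j \<noteq> 0"
    proof
      assume f0: "f j = 0"
      let ?a = "\<lambda>i. if i = j then 1 else (0::'a)"
      have "(\<Sum>i\<in>J. ?a i * f i) = 0" by (rule sum.neutral) (auto simp: f0)
      moreover have "\<forall>i\<in>J. ?a i \<in> K" using sf_0[OF sf] sf_1[OF sf] by auto
      ultimately have "?a j = 0" using J(2)[unfolded lin_indep_over_def, THEN spec[of _ ?a]] j by blast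
      then show False by simp
    qed
    then show "j \<in> {j. j < m \<and> f j \<noteq> 0}" using j J(1) by auto
  qed
  then have "card J \<le> card {j. j < m \<and> f j \<noteq> 0}" by (intro card_mono) simp_all
  then show ?thesis using J(3) by simp
qed

lemma block_bound:
  fixes f :: "nat \<Rightarrow> 'a::{finite,field}"
  assumes sf: "is_subfield K" and Bc: "Bm \<in> carrier_mat m p"
    and BK: "\<forall>r<m. \<forall>t<p. Bm $$ (r,t) \<in> K"
    and indF: "\<forall>w \<in> carrier_vec p. Bm *\<^sub>v w = 0\<^sub>v m \<longrightarrow> w = 0\<^sub>v p"
    and ker: "\<forall>t<p. (\<Sum>r<m. Bm $$ (r,t) * f r) = 0"
  shows "rank_over K f m + p \<le> m"
proof -
  obtain J where J: "J \<subseteq> {..<m}" "lin_indep_over K f J" "card J = rank_over K f m"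
    using ro_attained by blast
  have finJ: "finite J" using J(1) finite_subset by blast
  define T :: "(nat + nat) set" where "T = Inl ` {..<p} \<union> Inr ` J"
  define v where "v x r = (case x of Inl t \<Rightarrow> Bm $$ (r,t) | Inr j \<Rightarrow> (if r = j then 1 else 0))" for x r
  have finT: "finite T" using finJ by (simp add: T_def)
  have cardT: "card T = p + card J"
    unfolding T_def by (subst card_Un_disjoint) (auto simp: finJ card_image)
  have sumT: "(\<Sum>x\<in>T. g x) = (\<Sum>t<p. g (Inl t)) + (\<Sum>j\<in>J. g (Inr j))" for g :: "nat + nat \<Rightarrow> 'a"
    unfolding T_def by (subst sum.union_disjoint) (auto simp: finJ sum.reindex)
  have vK: "\<forall>x\<in>T. \<forall>r<m. v x r \<in> K"
    using BK sf_0[OF sf] sf_1[OF sf] by (auto simp: T_def v_def)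
  have ind: "\<forall>\<beta>. (\<forall>x\<in>T. \<beta> x \<in> K) \<and> (\<forall>r<m. (\<Sum>x\<in>T. \<beta> x * v x r) = 0) \<longrightarrow> (\<forall>x\<in>T. \<beta> x = 0)"
  proof (intro allI impI)
    fix \<beta> :: "nat + nat \<Rightarrow> 'a"
    assume h: "(\<forall>x\<in>T. \<beta> x \<in> K) \<and> (\<forall>r<m. (\<Sum>x\<in>T. \<beta> x * v x r) = 0)"
    have E: "(\<Sum>t<p. \<beta> (Inl t) * Bm $$ (r,t)) + (if r \<in> J then \<beta> (Inr r) else 0) = 0" if r: "r < m" for r
    proof -
      have "(\<Sum>j\<in>J. \<beta> (Inr j) * (if r = j then 1 else 0)) = (\<Sum>j\<in>J. if r = j then \<beta> (Inr j) else 0)"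
        by (rule sum.cong) auto
      also have "\<dots> = (if r \<in> J then \<beta> (Inr r) else 0)"
        using finJ by (simp only: sum.delta')
      finally have d1: "(\<Sum>j\<in>J. \<beta> (Inr j) * (if r = j then 1 else 0)) = (if r \<in> J then \<beta> (Inr r) else 0)" .
      have d2: "(\<Sum>x\<in>T. \<beta> x * v x r) = (\<Sum>t<p. \<beta> (Inl t) * Bm $$ (r,t)) + (\<Sum>j\<in>J. \<beta> (Inr j) * (if r = j then 1 else 0))"
        by (simp add: sumT v_def)
      have d3: "(\<Sum>x\<in>T. \<beta> x * v x r) = 0" using h r by blast
      show ?thesis unfolding d1[symmetric] d2[symmetric] by (rule d3)
    qed
    have "0 = (\<Sum>r<m. f r * ((\<Sum>t<p. \<beta> (Inl t) * Bm $$ (r,t)) + (if r \<in> J then \<beta> (Inr r) else 0)))"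
    proof (rule sym, rule sum.neutral, rule ballI)
      fix r assume "r \<in> {..<m}"
      then have "(\<Sum>t<p. \<beta> (Inl t) * Bm $$ (r,t)) + (if r \<in> J then \<beta> (Inr r) else 0) = 0" using E by simp
      then show "f r * ((\<Sum>t<p. \<beta> (Inl t) * Bm $$ (r,t)) + (if r \<in> J then \<beta> (Inr r) else 0)) = 0"
        by (simp only: mult_zero_right)
    qed
    also have "\<dots> = (\<Sum>r<m. f r * (\<Sum>t<p. \<beta> (Inl t) * Bm $$ (r,t))) + (\<Sum>r<m. f r * (if r \<in> J then \<beta> (Inr r) else 0))"
      by (simp only: distrib_left sum.distrib)
    also have "(\<Sum>r<m. f r * (\<Sum>t<p. \<beta> (Inl t) * Bm $$ (r,t))) = (\<Sum>r<m. \<Sum>t<p. \<beta> (Inl t) * (Bm $$ (r,t) * f r))"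
      unfolding sum_distrib_left by (intro sum.cong refl) (simp add: ac_simps)
    also have "\<dots> = (\<Sum>t<p. \<Sum>r<m. \<beta> (Inl t) * (Bm $$ (r,t) * f r))"
      by (rule sum.swap)
    also have "\<dots> = (\<Sum>t<p. \<beta> (Inl t) * (\<Sum>r<m. Bm $$ (r,t) * f r))"
      by (simp only: sum_distrib_left)
    also have "\<dots> = 0" using ker by simp
    also have "(\<Sum>r<m. f r * (if r \<in> J then \<beta> (Inr r) else 0)) = (\<Sum>r<m. if r \<in> J then \<beta> (Inr r) * f r else 0)"
      by (rule sum.cong) auto
    also have "\<dots> = (\<Sum>j\<in>{..<m} \<inter> J. \<beta> (Inr j) * f j)"
      by (rule sum.inter_restrict[symmetric]) simp
    also have "{..<m} \<inter> J = J" using J(1) by blast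
    finally have "(\<Sum>j\<in>J. \<beta> (Inr j) * f j) = 0" by simp
    then have z2: "\<forall>j\<in>J. \<beta> (Inr j) = 0"
    proof -
      have "\<forall>x\<in>T. \<beta> x \<in> K" using h by blast
      then have "\<forall>j\<in>J. \<beta> (Inr j) \<in> K" by (simp add: T_def)
      then show ?thesis using J(2)[unfolded lin_indep_over_def, THEN spec[of _ "\<lambda>j. \<beta> (Inr j)"]] \<open>(\<Sum>j\<in>J. \<beta> (Inr j) * f j) = 0\<close>
        by blast
    qed
    define w where "w = vec p (\<lambda>t. \<beta> (Inl t))"
    have "Bm *\<^sub>v w = 0\<^sub>v m"
    proof (rule eq_vecI)
      fix r assume "r < dim_vec (0\<^sub>v m :: 'a vec)"
      then have r: "r < m" by simp
      have "(Bm *\<^sub>v w) $ r = (\<Sum>t<p. Bm $$ (r,t) * \<beta> (Inl t))"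
        using Bc r by (simp add: w_def scalar_prod_def atLeast0LessThan)
      also have "\<dots> = (\<Sum>t<p. \<beta> (Inl t) * Bm $$ (r,t))"
        by (intro sum.cong refl) (simp add: mult.commute)
      also have "\<dots> = 0" using E[OF r] z2 by (cases "r \<in> J") auto
      finally show "(Bm *\<^sub>v w) $ r = 0\<^sub>v m $ r" using r by simp
    qed (use Bc in auto)
    moreover have "w \<in> carrier_vec p" by (simp add: w_def)
    ultimately have "w = 0\<^sub>v p" using indF by blast
    then have z1: "\<forall>t<p. \<beta> (Inl t) = 0"
      unfolding w_def by (metis index_vec index_zero_vec(1))
    show "\<forall>x\<in>T. \<beta> x = 0" using z1 z2 by (auto simp: T_def)
  qed
  have "card T \<le> m" by (rule count_K_indep[OF sf finT vK ind])
  then show ?thesis using cardT J(3) by simp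
qed

lemma block_kernel:
  fixes f :: "nat \<Rightarrow> 'a::{finite,field}"
  assumes sf: "is_subfield K" and q: "q \<le> m - rank_over K f m"
  shows "\<exists>Bm \<in> carrier_mat m q. (\<forall>r<m. \<forall>t<q. Bm $$ (r,t) \<in> K)
           \<and> (\<forall>w \<in> carrier_vec q. Bm *\<^sub>v w = 0\<^sub>v m \<longrightarrow> w = 0\<^sub>v q)
           \<and> (\<forall>t<q. (\<Sum>r<m. Bm $$ (r,t) * f r) = 0)"
proof -
  obtain J where J: "J \<subseteq> {..<m}" "lin_indep_over K f J" "card J = rank_over K f m"
    using ro_attained by blast
  have finJ: "finite J" using J(1) finite_subset by blast
  define D where "D = {..<m} - J"
  have cardD: "card D = m - rank_over K f m"
    unfolding D_def using J by (simp add: card_Diff_subset finJ)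
  have dep: "\<exists>c. (\<forall>i\<in>J. c i \<in> K) \<and> f j = (\<Sum>i\<in>J. c i * f i)" if j: "j \<in> D" for j
  proof -
    have jJ: "j \<notin> J" "j < m" using j by (auto simp: D_def)
    have "\<not> lin_indep_over K f (insert j J)"
    proof
      assume "lin_indep_over K f (insert j J)"
      then have "card (insert j J) \<le> rank_over K f m" using J(1) jJ by (intro ro_ge) auto
      then show False using J(3) jJ finJ by simp
    qed
    then obtain a where a: "\<forall>i\<in>insert j J. a i \<in> K" "(\<Sum>i\<in>insert j J. a i * f i) = 0"
      and nz: "\<exists>i\<in>insert j J. a i \<noteq> 0"
      unfolding lin_indep_over_def by blast
    have s: "a j * f j + (\<Sum>i\<in>J. a i * f i) = 0" using a(2) jJ finJ by simp
    have aj: "a j \<noteq> 0"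
    proof
      assume "a j = 0"
      then have "(\<Sum>i\<in>J. a i * f i) = 0" using s by simp
      then have "\<forall>i\<in>J. a i = 0" using J(2)[unfolded lin_indep_over_def, THEN spec[of _ a]] a(1) by blast
      then show False using nz \<open>a j = 0\<close> by blast
    qed
    show ?thesis
    proof (rule exI[of _ "\<lambda>i. - a i / a j"], intro conjI)
      show "\<forall>i\<in>J. - a i / a j \<in> K" using a(1) by (auto intro!: sf_divide sf_uminus sf)
      have "(\<Sum>i\<in>J. - a i / a j * f i) = - (\<Sum>i\<in>J. a i * f i) / a j"
        by (simp add: sum_divide_distrib sum_negf)
      also have "\<dots> = f j"
      proof -
        have "a j * f j = - (\<Sum>i\<in>J. a i * f i)" using s by (simp add: eq_neg_iff_add_eq_0)
        then show ?thesis using aj by (metis nonzero_mult_div_cancel_left)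
      qed
      finally show "f j = (\<Sum>i\<in>J. - a i / a j * f i)" by simp
    qed
  qed
  obtain L where L: "\<And>j. j \<in> D \<Longrightarrow> (\<forall>i\<in>J. L j i \<in> K) \<and> f j = (\<Sum>i\<in>J. L j i * f i)"
    using dep by metis
  obtain e where e: "bij_betw e {0..<m - rank_over K f m} D"
    using ex_bij_betw_nat_finite[of D] cardD by (metis D_def finite_Diff finite_lessThan)
  have eD: "t < q \<Longrightarrow> e t \<in> D" for t using e q by (auto simp: bij_betw_def)
  have einj: "t < q \<Longrightarrow> t' < q \<Longrightarrow> e t = e t' \<Longrightarrow> t = t'" for t t'
    using e q unfolding bij_betw_def inj_on_def by auto
  define Bm where "Bm = mat m q (\<lambda>(r,t). if r = e t then 1 else if r \<in> J then - L (e t) r else 0)"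
  have Bc: "Bm \<in> carrier_mat m q" by (simp add: Bm_def)
  have BK: "\<forall>r<m. \<forall>t<q. Bm $$ (r,t) \<in> K"
    using L eD sf_0[OF sf] sf_1[OF sf] sf_uminus[OF sf] by (auto simp: Bm_def)
  have ker: "\<forall>t<q. (\<Sum>r<m. Bm $$ (r,t) * f r) = 0"
  proof (intro allI impI)
    fix t assume t: "t < q"
    have etD: "e t \<in> D" using eD[OF t] .
    then have et: "e t < m" "e t \<notin> J" by (auto simp: D_def)
    have "(\<Sum>r<m. Bm $$ (r,t) * f r) = (\<Sum>r<m. (if r = e t then f r else 0) + (if r \<in> J then - (L (e t) r * f r) else 0))"
      using t et by (intro sum.cong refl) (auto simp: Bm_def)
    also have "\<dots> = f (e t) + (\<Sum>r\<in>{..<m} \<inter> J. - (L (e t) r * f r))"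
      unfolding sum.distrib using et by (simp add: sum.inter_restrict)
    also have "{..<m} \<inter> J = J" using J(1) by blast
    also have "f (e t) + (\<Sum>r\<in>J. - (L (e t) r * f r)) = 0"
      using L[OF etD] by (simp add: sum_negf)
    finally show "(\<Sum>r<m. Bm $$ (r,t) * f r) = 0" .
  qed
  have indF: "\<forall>w \<in> carrier_vec q. Bm *\<^sub>v w = 0\<^sub>v m \<longrightarrow> w = 0\<^sub>v q"
  proof (intro ballI impI)
    fix w :: "'a vec" assume w: "w \<in> carrier_vec q" and Bw: "Bm *\<^sub>v w = 0\<^sub>v m"
    show "w = 0\<^sub>v q"
    proof (rule eq_vecI)
      fix t0 assume "t0 < dim_vec (0\<^sub>v q :: 'a vec)"
      then have t0: "t0 < q" by simp
      have et: "e t0 < m" "e t0 \<notin> J" using eD[OF t0] by (auto simp: D_def)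
      have "(Bm *\<^sub>v w) $ (e t0) = (\<Sum>t<q. Bm $$ (e t0, t) * w $ t)"
        using Bc w et by (simp add: scalar_prod_def atLeast0LessThan)
      also have "\<dots> = (\<Sum>t<q. if t = t0 then w $ t else 0)"
        using et t0 einj by (intro sum.cong refl) (auto simp: Bm_def)
      also have "\<dots> = w $ t0" using t0 by simp
      finally have "w $ t0 = (Bm *\<^sub>v w) $ (e t0)" by simp
      also have "\<dots> = 0" using Bw et by simp
      finally show "w $ t0 = 0\<^sub>v q $ t0" using t0 by simp
    qed (use w in simp)
  qed
  show ?thesis using Bc BK ker indF by blast
qed

lemma mult_unit_vec_col:
  fixes A :: "'a::field mat"
  assumes "A \<in> carrier_mat n nc" "i < nc"
  shows "A *\<^sub>v unit_vec nc i = col A i"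
  using assms by (intro eq_vecI) auto

lemma rank_iff_ker:
  fixes A :: "'a::field mat"
  assumes A: "A \<in> carrier_mat n nc"
  shows "vec_space.rank n A = nc \<longleftrightarrow> (\<forall>v\<in>carrier_vec nc. A *\<^sub>v v = 0\<^sub>v n \<longrightarrow> v = 0\<^sub>v nc)"
proof
  assume rk: "vec_space.rank n A = nc"
  show "\<forall>v\<in>carrier_vec nc. A *\<^sub>v v = 0\<^sub>v n \<longrightarrow> v = 0\<^sub>v nc"
  proof (intro ballI impI, rule ccontr)
    fix v :: "'a vec" assume v: "v \<in> carrier_vec nc" "A *\<^sub>v v = 0\<^sub>v n" "v \<noteq> 0\<^sub>v nc"
    show False
    proof (cases "distinct (cols A)")
      case True
      then have "module.lin_indpt class_ring (module_vec TYPE('a) n) (set (cols A))"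
        using vec_space.full_rank_lin_indpt[OF A rk] by blast
      then show False using vec_space.lin_depI[OF A v(1) v(3) v(2) True] by blast
    next
      case False
      interpret vs: vec_space "TYPE('a)" n .
      obtain S where "maximal S (\<lambda>T. T \<subseteq> set (cols A) \<and> vs.lin_indpt T)"
        using maximal_exists[of "(\<lambda>T. T \<subseteq> set (cols A) \<and> vs.lin_indpt T)" "card (set (cols A))" "{}"]
        by (meson List.finite_set card_mono empty_iff empty_subsetI vs.finite_lin_indpt2 rev_finite_subset)
      then have S: "vs.rank A = card S" "card S \<le> card (set (cols A))"
        using vs.rank_card_indpt[OF A] by (auto simp: card_mono maximal_def)
      have "card (set (cols A)) < length (cols A)"
        using False card_distinct[of "cols A"] card_length[of "cols A"] by linarith
      then show False using S rk A by simp
    qed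
  qed
next
  assume ker: "\<forall>v\<in>carrier_vec nc. A *\<^sub>v v = 0\<^sub>v n \<longrightarrow> v = 0\<^sub>v nc"
  have dist: "distinct (cols A)"
  proof (rule ccontr)
    assume "\<not> distinct (cols A)"
    then obtain i j where ij: "i \<noteq> j" "cols A ! i = cols A ! j" "i < length (cols A)" "j < length (cols A)"
      using distinct_conv_nth by blast
    then have c: "col A i = col A j" "i < nc" "j < nc" using A by auto
    define v :: "'a vec" where "v = unit_vec nc i - unit_vec nc j"
    have vc: "v \<in> carrier_vec nc" by (simp add: v_def)
    have "A *\<^sub>v v = A *\<^sub>v unit_vec nc i - A *\<^sub>v unit_vec nc j"
      unfolding v_def using A by (simp add: mult_minus_distrib_mat_vec)
    also have "\<dots> = 0\<^sub>v n" using c A by (simp add: mult_unit_vec_col)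
    finally have "v = 0\<^sub>v nc" using ker vc by blast
    moreover have "v $ i = 1" using ij c by (simp add: v_def)
    ultimately show False using c by simp
  qed
  have "module.lin_indpt class_ring (module_vec TYPE('a) n) (set (cols A))"
    using vec_space.lin_depE[OF A _ dist] ker by metis
  then show "vec_space.rank n A = nc" using vec_space.lin_indpt_full_rank[OF A dist] by blast
qed

lemma full_row_rank:
  fixes G :: "'a::field mat"
  assumes G: "G \<in> carrier_mat k n" and rk: "vec_space.rank k G = k"
    and x: "x \<in> carrier_vec k" and Gx: "transpose_mat G *\<^sub>v x = 0\<^sub>v n"
  shows "x = 0\<^sub>v k"
proof -
  interpret vs: vec_space "TYPE('a)" k .
  obtain S where mS: "maximal S (\<lambda>T. T \<subseteq> set (cols G) \<and> vs.lin_indpt T)"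
    using maximal_exists[of "(\<lambda>T. T \<subseteq> set (cols G) \<and> vs.lin_indpt T)" "card (set (cols G))" "{}"]
    by (meson List.finite_set card_mono empty_iff empty_subsetI vs.finite_lin_indpt2 rev_finite_subset)
  have cS: "card S = k" using vs.rank_card_indpt[OF G mS] rk by simp
  have SS: "S \<subseteq> set (cols G)" "vs.lin_indpt S" using mS by (auto simp: maximal_def)
  have colsc: "set (cols G) \<subseteq> carrier_vec k" using G cols_dim by blast
  have Sc: "S \<subseteq> carrier_vec k" using SS(1) colsc by blast
  have finS: "finite S" using SS(1) finite_subset by blast
  have "vs.basis S"
    by (rule vs.dim_li_is_basis) (use finS Sc SS cS in \<open>auto simp: vs.dim_is_n\<close>)
  then have spanS: "vs.span S = carrier_vec k" by (simp add: vs.basis_def)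
  have "vs.span S \<subseteq> vs.span (set (cols G))" using SS(1) colsc by (intro vs.span_is_monotone) auto
  then have spanC: "carrier_vec k \<subseteq> vs.span (set (cols G))" using spanS by simp
  have "x \<in> vs.orthogonal_complement (set (cols G))"
    unfolding vs.orthogonal_complement_def
  proof (intro CollectI conjI ballI)
    show "x \<in> carrier_vec k" by fact
    fix y assume "y \<in> set (cols G)"
    then obtain j where j: "j < n" "y = col G j" using G by (auto simp: in_set_conv_nth)
    have "x \<bullet> y = y \<bullet> x" using x colsc \<open>y \<in> set (cols G)\<close> by (intro comm_scalar_prod) auto
    also have "\<dots> = (transpose_mat G *\<^sub>v x) $ j" using j G by simp
    also have "\<dots> = 0" using Gx j by simp
    finally show "x \<bullet> y = 0" .
  qed
  then have "x \<in> vs.orthogonal_complement (vs.span (set (cols G)))"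
    using vs.in_orthogonal_complement_span[OF colsc] by simp
  then have orth: "\<forall>y\<in>carrier_vec k. x \<bullet> y = 0"
    using spanC unfolding vs.orthogonal_complement_def by blast
  show ?thesis
  proof (rule eq_vecI)
    fix i assume "i < dim_vec (0\<^sub>v k :: 'a vec)"
    then have i: "i < k" by simp
    have "x $ i = x \<bullet> unit_vec k i" using i by simp
    also have "\<dots> = 0" using orth by simp
    finally show "x $ i = 0\<^sub>v k $ i" using i by simp
  qed (use x in simp)
qed

lemma not_inv_ker:
  fixes M :: "'a::field mat"
  assumes M: "M \<in> carrier_mat k k" and ni: "\<not> invertible_mat M"
  shows "\<exists>y\<in>carrier_vec k. y \<noteq> 0\<^sub>v k \<and> transpose_mat M *\<^sub>v y = 0\<^sub>v k"
proof -
  have "det M = 0"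
  proof (rule ccontr)
    assume "det M \<noteq> 0"
    from det_non_zero_imp_unit[OF M this, of "()"]
    obtain B where "B \<in> carrier_mat k k" "B * M = 1\<^sub>m k" "M * B = 1\<^sub>m k"
      unfolding Units_def ring_mat_def by auto
    then have "invertible_mat M" unfolding invertible_mat_def inverts_mat_def using M by auto
    then show False using ni by simp
  qed
  then have "det (transpose_mat M) = 0" using det_transpose[OF M] by simp
  then show ?thesis using det_0_iff_vec_prod_zero_field[of "transpose_mat M" k] M by auto
qed

lemma inv_ker:
  fixes M :: "'a::field mat"
  assumes M: "M \<in> carrier_mat k k" "invertible_mat M" and y: "y \<in> carrier_vec k" "transpose_mat M *\<^sub>v y = 0\<^sub>v k"
  shows "y = 0\<^sub>v k"
proof -
  obtain B where "inverts_mat M B" "inverts_mat B M" using M(2) invertible_mat_def by blast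
  then have MB: "M * B = 1\<^sub>m k" and BM: "B * M = 1\<^sub>m (dim_row B)" unfolding inverts_mat_def using M(1) by auto
  have "dim_col B = k" using arg_cong[OF MB, of dim_col] by simp
  moreover have "dim_row B = k" using arg_cong[OF BM, of dim_col] M(1) by simp
  ultimately have Bc: "B \<in> carrier_mat k k" by auto
  have "y = transpose_mat (M * B) *\<^sub>v y" using MB y by simp
  also have "\<dots> = (transpose_mat B * transpose_mat M) *\<^sub>v y" using transpose_mult[OF M(1) Bc] by simp
  also have "\<dots> = transpose_mat B *\<^sub>v (transpose_mat M *\<^sub>v y)" using Bc M(1) y by simp
  also have "\<dots> = 0\<^sub>v k" using y Bc by (intro eq_vecI) (auto simp: scalar_prod_def)
  finally show ?thesis .
qed

lemma singleton_vec:
  fixes G :: "'a::field mat"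
  assumes G: "G \<in> carrier_mat k n" and kn: "k \<le> n" and k1: "k \<ge> 1"
  shows "\<exists>x\<in>carrier_vec k. x \<noteq> 0\<^sub>v k \<and> (\<forall>j<k-1. (transpose_mat G *\<^sub>v x) $ j = 0)"
proof -
  obtain \<alpha> where a: "\<forall>r<k-1. (\<Sum>t\<in>{..<k}. \<alpha> t * G $$ (t, r)) = 0" "\<exists>t\<in>{..<k}. \<alpha> t \<noteq> 0"
    using dependent_exists[of "{..<k}" "k-1" "\<lambda>t r. G $$ (t, r)"] k1 by auto
  define x where "x = vec k \<alpha>"
  have "(transpose_mat G *\<^sub>v x) $ j = 0" if j: "j < k - 1" for j
  proof -
    have "(transpose_mat G *\<^sub>v x) $ j = (\<Sum>t<k. G $$ (t, j) * \<alpha> t)"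
      using G j kn by (simp add: x_def scalar_prod_def atLeast0LessThan)
    also have "\<dots> = (\<Sum>t<k. \<alpha> t * G $$ (t, j))" by (intro sum.cong refl) (simp add: mult.commute)
    also have "\<dots> = 0" using a(1) j by simp
    finally show ?thesis .
  qed
  moreover have "x \<noteq> 0\<^sub>v k" using a(2) unfolding x_def by (metis index_vec index_zero_vec(1) lessThan_iff)
  ultimately show ?thesis by (auto simp: x_def)
qed

lemma card_as_sum: "card {r. r < (m::nat) \<and> P r} = (\<Sum>r<m. if P r then 1 else (0::nat))"
proof -
  have "card {r. r < m \<and> P r} = card {r \<in> {..<m}. P r}" by (simp add: lessThan_def)
  also have "\<dots> = (\<Sum>r\<in>{r \<in> {..<m}. P r}. 1)" by simp
  also have "\<dots> = (\<Sum>r<m. if P r then 1 else 0)" by (rule sum.inter_filter) simp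
  finally show ?thesis .
qed

lemma choose_ks: "k \<le> (\<Sum>i<(l::nat). d i) \<Longrightarrow> \<exists>ks. (\<forall>i<l. ks i \<le> (d i::nat)) \<and> (\<Sum>i<l. ks i) = k"
proof (induction l arbitrary: k)
  case 0 then show ?case by simp
next
  case (Suc l)
  define k' where "k' = min k (\<Sum>i<l. d i)"
  obtain ks where ks: "\<forall>i<l. ks i \<le> d i" "(\<Sum>i<l. ks i) = k'"
    using Suc.IH[of k'] by (auto simp: k'_def)
  define ks' where "ks' = ks(l := k - k')"
  have "(\<Sum>i<l. ks' i) = (\<Sum>i<l. ks i)" by (intro sum.cong) (auto simp: ks'_def)
  then have "(\<Sum>i<Suc l. ks' i) = k" using ks by (simp add: ks'_def k'_def)
  moreover have "\<forall>i<Suc l. ks' i \<le> d i" using ks Suc.prems by (auto simp: ks'_def k'_def less_Suc_eq)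
  ultimately show ?case by blast
qed

theorem mainTheorem1:
  fixes l k n :: nat and nn :: "nat \<Rightarrow> nat" and K :: "nat \<Rightarrow> 'a::{finite,field} set"
    and G :: "'a mat" and C :: "'a vec set"
  assumes "l > 0"
    and "\<forall>i<l. nn i > 0"
    and "\<forall>i<l. is_subfield (K i)"
    and "n = (\<Sum>i<l. nn i)"
    and "k \<ge> 1"
    and "G \<in> carrier_mat k n"
    and "vec_space.rank k G = k"
    and "C = {transpose_mat G *\<^sub>v x | x. x \<in> carrier_vec k}"
  shows "MSRD l nn K n k C \<longleftrightarrow>
    (\<forall>ks B. (\<forall>i<l. ks i \<le> nn i \<and> B i \<in> carrier_mat (nn i) (ks i) \<and>
                    (\<forall>r<nn i. \<forall>c<ks i. B i $$ (r, c) \<in> K i))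
           \<and> (\<Sum>i<l. ks i) = k
           \<and> vec_space.rank n (block_diag l nn ks B) = k
        \<longrightarrow> invertible_mat (G * block_diag l nn ks B))"
proof -
  note sf = assms(3) and G = assms(6) and rk = assms(7) and Cdef = assms(8) and k1 = assms(5)
  have nl: "offs nn l = n" using assms(4) by (simp add: offs_def)
  have kn: "k \<le> n" using vec_space.rank_le_nc[OF G] rk by simp
  have srank_eq: "srank l nn K c = (\<Sum>i<l. rank_over (K i) (\<lambda>j. c $ (offs nn i + j)) (nn i))" for c :: "'a vec"
    by (simp add: srank_def)
  have srank_le: "srank l nn K c \<le> n" for c :: "'a vec"
  proof -
    have "srank l nn K c \<le> (\<Sum>i<l. nn i)" unfolding srank_eq by (intro sum_mono ro_le_m)
    then show ?thesis using assms(4) by simp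
  qed
  define S where "S = {srank l nn K c | c. c \<in> C \<and> c \<noteq> 0\<^sub>v n}"
  have finS: "finite S" by (rule finite_subset[of _ "{..n}"]) (auto simp: S_def srank_le)
  \<comment> \<open>Singleton-type codeword\<close>
  obtain c0 where c0: "c0 \<in> C" "c0 \<noteq> 0\<^sub>v n" "srank l nn K c0 \<le> n - k + 1"
  proof -
    obtain x where x: "x \<in> carrier_vec k" "x \<noteq> 0\<^sub>v k" "\<forall>j<k-1. (transpose_mat G *\<^sub>v x) $ j = 0"
      using singleton_vec[OF G kn k1] by blast
    define c where "c = transpose_mat G *\<^sub>v x"
    have cC: "c \<in> C" using x(1) by (auto simp: Cdef c_def)
    have c0: "c \<noteq> 0\<^sub>v n" using full_row_rank[OF G rk x(1)] x(2) by (auto simp: c_def)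
    have "srank l nn K c \<le> (\<Sum>i<l. card {r. r < nn i \<and> c $ (offs nn i + r) \<noteq> 0})"
      unfolding srank_eq using sf by (intro sum_mono ro_le_nz) auto
    also have "\<dots> = (\<Sum>i<l. \<Sum>r<nn i. if c $ (offs nn i + r) \<noteq> 0 then 1 else 0)"
      by (simp only: card_as_sum)
    also have "\<dots> = (\<Sum>s<offs nn l. if c $ s \<noteq> 0 then 1 else 0)"
      by (rule sum_offs[symmetric])
    also have "\<dots> \<le> (\<Sum>s<n. if k - 1 \<le> s then 1 else 0)"
      unfolding nl using x(3) by (intro sum_mono) (auto simp: c_def)
    also have "\<dots> = card {s. s < n \<and> k - 1 \<le> s}" by (simp only: card_as_sum)
    also have "{s. s < n \<and> k - 1 \<le> s} = {k-1..<n}" by auto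
    also have "card {k-1..<n} = n - k + 1" using kn k1 by simp
    finally show ?thesis using that cC c0 by blast
  qed
  have S0: "srank l nn K c0 \<in> S" using c0 by (auto simp: S_def)
  have msrd_iff: "MSRD l nn K n k C \<longleftrightarrow> (\<forall>c\<in>C. c \<noteq> 0\<^sub>v n \<longrightarrow> n - k + 1 \<le> srank l nn K c)"
  proof
    assume "MSRD l nn K n k C"
    then have "Min S = n - k + 1" by (simp add: MSRD_def min_srank_dist_def S_def)
    then show "\<forall>c\<in>C. c \<noteq> 0\<^sub>v n \<longrightarrow> n - k + 1 \<le> srank l nn K c"
      using Min_le[OF finS] by (auto simp: S_def)
  next
    assume h: "\<forall>c\<in>C. c \<noteq> 0\<^sub>v n \<longrightarrow> n - k + 1 \<le> srank l nn K c"
    have "S \<noteq> {}" using S0 by blast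
    then have "Min S \<in> S" using Min_in[OF finS] by blast
    then have "n - k + 1 \<le> Min S" using h by (auto simp: S_def)
    moreover have "Min S \<le> n - k + 1" using Min_le[OF finS S0] c0(3) by simp
    ultimately have "Min S = n - k + 1" by simp
    then show "MSRD l nn K n k C" by (simp add: MSRD_def min_srank_dist_def S_def)
  qed
  have Cc: "c \<in> C \<Longrightarrow> \<exists>x\<in>carrier_vec k. c = transpose_mat G *\<^sub>v x" for c using Cdef by auto
  show ?thesis
    unfolding msrd_iff
  proof (intro iffI allI impI)
    fix ks B
    assume LB: "\<forall>c\<in>C. c \<noteq> 0\<^sub>v n \<longrightarrow> n - k + 1 \<le> srank l nn K c"
    assume hyp: "(\<forall>i<l. ks i \<le> nn i \<and> B i \<in> carrier_mat (nn i) (ks i) \<and>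
                    (\<forall>r<nn i. \<forall>c<ks i. B i $$ (r, c) \<in> K i))
           \<and> (\<Sum>i<l. ks i) = k
           \<and> vec_space.rank n (block_diag l nn ks B) = k"
    define A where "A = block_diag l nn ks B"
    have kl: "offs ks l = k" using hyp by (simp add: offs_def)
    have Ac: "A \<in> carrier_mat n k" using bd_carrier[of l nn ks B] nl kl by (simp add: A_def)
    have GAc: "G * A \<in> carrier_mat k k" using G Ac by simp
    have Aker: "\<forall>v\<in>carrier_vec k. A *\<^sub>v v = 0\<^sub>v n \<longrightarrow> v = 0\<^sub>v k"
    proof -
      have "vec_space.rank n A = k" using hyp by (simp add: A_def)
      then show ?thesis using rank_iff_ker[OF Ac] by blast
    qed
    show "invertible_mat (G * block_diag l nn ks B)"
    proof (rule ccontr)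
      assume "\<not> invertible_mat (G * block_diag l nn ks B)"
      then have "\<not> invertible_mat (G * A)" by (simp add: A_def)
      then obtain y where y: "y \<in> carrier_vec k" "y \<noteq> 0\<^sub>v k" "transpose_mat (G * A) *\<^sub>v y = 0\<^sub>v k"
        using not_inv_ker[OF GAc] by blast
      define c where "c = transpose_mat G *\<^sub>v y"
      have cC: "c \<in> C" unfolding Cdef c_def using y(1) by blast
      have cc: "c \<in> carrier_vec n" using G unfolding c_def by (intro carrier_vecI) simp
      have cnz: "c \<noteq> 0\<^sub>v n"
      proof
        assume "c = 0\<^sub>v n"
        then have "transpose_mat G *\<^sub>v y = 0\<^sub>v n" by (simp add: c_def)
        then have "y = 0\<^sub>v k" by (rule full_row_rank[OF G rk y(1)])
        then show False using y(2) by simp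
      qed
      have Atc: "transpose_mat A *\<^sub>v c = 0\<^sub>v k"
      proof -
        have "transpose_mat (G * A) = transpose_mat A * transpose_mat G" by (rule transpose_mult[OF G Ac])
        then have "transpose_mat A *\<^sub>v c = transpose_mat (G * A) *\<^sub>v y"
          using G Ac y(1) by (simp add: c_def)
        then show ?thesis using y(3) by simp
      qed
      have blk: "rank_over (K i) (\<lambda>j. c $ (offs nn i + j)) (nn i) + ks i \<le> nn i" if i: "i < l" for i
      proof (rule block_bound)
        show "is_subfield (K i)" using sf i by simp
        show "B i \<in> carrier_mat (nn i) (ks i)" using hyp i by simp
        show "\<forall>r<nn i. \<forall>t<ks i. B i $$ (r, t) \<in> K i" using hyp i by simp
        show "\<forall>t<ks i. (\<Sum>r<nn i. B i $$ (r, t) * c $ (offs nn i + r)) = 0"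
        proof (intro allI impI)
          fix t assume t: "t < ks i"
          have "(\<Sum>r<nn i. B i $$ (r, t) * c $ (offs nn i + r)) = (transpose_mat A *\<^sub>v c) $ (offs ks i + t)"
            unfolding A_def using bd_tmult_vec[of i l t ks c nn B, OF i t] cc nl by simp
          also have "\<dots> = 0" using Atc offs_lt[of i l t ks, OF i t] kl by simp
          finally show "(\<Sum>r<nn i. B i $$ (r, t) * c $ (offs nn i + r)) = 0" .
        qed
        show "\<forall>w\<in>carrier_vec (ks i). B i *\<^sub>v w = 0\<^sub>v (nn i) \<longrightarrow> w = 0\<^sub>v (ks i)"
        proof (intro ballI impI)
          fix w :: "'a vec" assume w: "w \<in> carrier_vec (ks i)" and Bw: "B i *\<^sub>v w = 0\<^sub>v (nn i)"
          define W where "W = vec k (\<lambda>s. if offs ks i \<le> s \<and> s < offs ks i + ks i then w $ (s - offs ks i) else 0)"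
          have Wc: "W \<in> carrier_vec k" by (simp add: W_def)
          have Wblk: "W $ (offs ks i' + t) = (if i' = i then w $ t else 0)" if i': "i' < l" and t: "t < ks i'" for i' t
          proof -
            have lt: "offs ks i' + t < k" using offs_lt[of i' l t ks, OF i' t] kl by simp
            show ?thesis
            proof (cases "i' = i")
              case True then show ?thesis using lt t by (simp add: W_def)
            next
              case False
              have "\<not> (offs ks i \<le> offs ks i' + t \<and> offs ks i' + t < offs ks i + ks i)"
              proof
                assume h: "offs ks i \<le> offs ks i' + t \<and> offs ks i' + t < offs ks i + ks i"
                then have "i = i'" using offs_unique[of "offs ks i' + t - offs ks i" ks i t i'] t by auto
                then show False using False by simp
              qed
              then show ?thesis using lt False unfolding W_def by auto
            qed
          qed
          have "A *\<^sub>v W = 0\<^sub>v n"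
          proof (rule eq_vecI)
            fix s assume "s < dim_vec (0\<^sub>v n :: 'a vec)"
            then have "s < offs nn l" using nl by simp
            then obtain i' r where ir: "i' < l" "r < nn i'" "s = offs nn i' + r" using offs_decomp by blast
            have "(A *\<^sub>v W) $ s = (\<Sum>t<ks i'. B i' $$ (r,t) * W $ (offs ks i' + t))"
              unfolding A_def ir(3) using bd_mult_vec[of i' l r nn W ks B, OF ir(1,2)] Wc kl by simp
            also have "\<dots> = (\<Sum>t<ks i'. if i' = i then B i $$ (r,t) * w $ t else 0)"
              using Wblk[OF ir(1)] by (intro sum.cong refl) auto
            also have "\<dots> = 0"
            proof (cases "i' = i")
              case True
              have "(\<Sum>t<ks i. B i $$ (r,t) * w $ t) = (B i *\<^sub>v w) $ r"
              proof -
                have Bi: "B i \<in> carrier_mat (nn i) (ks i)" using hyp i by simp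
                show ?thesis using Bi w ir(2) True by (simp add: scalar_prod_def atLeast0LessThan)
              qed
              also have "\<dots> = 0" using Bw ir(2) True by simp
              finally show ?thesis using True by simp
            qed simp
            finally show "(A *\<^sub>v W) $ s = 0\<^sub>v n $ s" using \<open>s < offs nn l\<close> nl by simp
          qed (use Ac in simp)
          then have "W = 0\<^sub>v k" using Aker Wc by blast
          show "w = 0\<^sub>v (ks i)"
          proof (rule eq_vecI)
            fix t assume "t < dim_vec (0\<^sub>v (ks i) :: 'a vec)"
            then have t: "t < ks i" by simp
            have "w $ t = W $ (offs ks i + t)" using Wblk[OF i t] by simp
            also have "\<dots> = 0" using \<open>W = 0\<^sub>v k\<close> offs_lt[of i l t ks, OF i t] kl by simp
            finally show "w $ t = 0\<^sub>v (ks i) $ t" using t by simp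
          qed (use w in simp)
        qed
      qed
      have "srank l nn K c + k \<le> n"
      proof -
        have "srank l nn K c + k = (\<Sum>i<l. rank_over (K i) (\<lambda>j. c $ (offs nn i + j)) (nn i) + ks i)"
          unfolding srank_eq sum.distrib using hyp by simp
        also have "\<dots> \<le> (\<Sum>i<l. nn i)" using blk by (intro sum_mono) simp
        finally show ?thesis using assms(4) by simp
      qed
      then show False using LB cC cnz by fastforce
    qed
  next
    assume INV: "\<forall>ks B. (\<forall>i<l. ks i \<le> nn i \<and> B i \<in> carrier_mat (nn i) (ks i) \<and>
                    (\<forall>r<nn i. \<forall>c<ks i. B i $$ (r, c) \<in> K i))
           \<and> (\<Sum>i<l. ks i) = k
           \<and> vec_space.rank n (block_diag l nn ks B) = k
        \<longrightarrow> invertible_mat (G * block_diag l nn ks B)"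
    show "\<forall>c\<in>C. c \<noteq> 0\<^sub>v n \<longrightarrow> n - k + 1 \<le> srank l nn K c"
    proof (intro ballI impI, rule ccontr)
      fix c assume cC: "c \<in> C" and cnz: "c \<noteq> 0\<^sub>v n" and lt: "\<not> n - k + 1 \<le> srank l nn K c"
      obtain x where x: "x \<in> carrier_vec k" "c = transpose_mat G *\<^sub>v x" using Cc[OF cC] by blast
      have cc: "c \<in> carrier_vec n" using G unfolding x(2) by (intro carrier_vecI) simp
      have xnz: "x \<noteq> 0\<^sub>v k"
      proof
        assume "x = 0\<^sub>v k"
        then have "c = 0\<^sub>v n" using x(2) G by (intro eq_vecI) (auto simp: scalar_prod_def)
        then show False using cnz by simp
      qed
      define ro where "ro i = rank_over (K i) (\<lambda>j. c $ (offs nn i + j)) (nn i)" for i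
      have ro_le: "ro i \<le> nn i" for i by (simp add: ro_def ro_le_m)
      have "(\<Sum>i<l. nn i - ro i) = (\<Sum>i<l. nn i) - (\<Sum>i<l. ro i)"
        using ro_le by (simp add: sum_subtractf_nat)
      also have "(\<Sum>i<l. ro i) = srank l nn K c" by (simp add: srank_eq ro_def)
      finally have "k \<le> (\<Sum>i<l. nn i - ro i)" using lt kn assms(4) by simp
      then obtain ks where ks: "\<forall>i<l. ks i \<le> nn i - ro i" "(\<Sum>i<l. ks i) = k"
        using choose_ks by blast
      have "\<forall>i\<in>{..<l}. \<exists>Bm. Bm \<in> carrier_mat (nn i) (ks i) \<and> (\<forall>r<nn i. \<forall>t<ks i. Bm $$ (r,t) \<in> K i)
           \<and> (\<forall>w \<in> carrier_vec (ks i). Bm *\<^sub>v w = 0\<^sub>v (nn i) \<longrightarrow> w = 0\<^sub>v (ks i))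
           \<and> (\<forall>t<ks i. (\<Sum>r<nn i. Bm $$ (r,t) * c $ (offs nn i + r)) = 0)"
      proof
        fix i assume "i \<in> {..<l}"
        then have i: "i < l" by simp
        show "\<exists>Bm. Bm \<in> carrier_mat (nn i) (ks i) \<and> (\<forall>r<nn i. \<forall>t<ks i. Bm $$ (r,t) \<in> K i)
           \<and> (\<forall>w \<in> carrier_vec (ks i). Bm *\<^sub>v w = 0\<^sub>v (nn i) \<longrightarrow> w = 0\<^sub>v (ks i))
           \<and> (\<forall>t<ks i. (\<Sum>r<nn i. Bm $$ (r,t) * c $ (offs nn i + r)) = 0)"
          using block_kernel[of "K i" "ks i" "nn i" "\<lambda>j. c $ (offs nn i + j)"] sf i ks(1)
          by (simp add: ro_def Bex_def)
      qed
      from bchoice[OF this] obtain B where B: "\<forall>i\<in>{..<l}. B i \<in> carrier_mat (nn i) (ks i) \<and> (\<forall>r<nn i. \<forall>t<ks i. B i $$ (r,t) \<in> K i)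
           \<and> (\<forall>w \<in> carrier_vec (ks i). B i *\<^sub>v w = 0\<^sub>v (nn i) \<longrightarrow> w = 0\<^sub>v (ks i))
           \<and> (\<forall>t<ks i. (\<Sum>r<nn i. B i $$ (r,t) * c $ (offs nn i + r)) = 0)"
        by blast
      have Bc: "\<And>i. i < l \<Longrightarrow> B i \<in> carrier_mat (nn i) (ks i)"
        and BK: "\<And>i. i < l \<Longrightarrow> \<forall>r<nn i. \<forall>t<ks i. B i $$ (r,t) \<in> K i"
        and Bind: "\<And>i w. i < l \<Longrightarrow> w \<in> carrier_vec (ks i) \<Longrightarrow> B i *\<^sub>v w = 0\<^sub>v (nn i) \<Longrightarrow> w = 0\<^sub>v (ks i)"
        and Bker: "\<And>i t. i < l \<Longrightarrow> t < ks i \<Longrightarrow> (\<Sum>r<nn i. B i $$ (r,t) * c $ (offs nn i + r)) = 0"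
        using B by (meson lessThan_iff)+
      define A where "A = block_diag l nn ks B"
      have kl: "offs ks l = k" using ks by (simp add: offs_def)
      have Ac: "A \<in> carrier_mat n k" using bd_carrier[of l nn ks B] nl kl by (simp add: A_def)
      have GAc: "G * A \<in> carrier_mat k k" using G Ac by simp
      have Aker: "\<forall>W\<in>carrier_vec k. A *\<^sub>v W = 0\<^sub>v n \<longrightarrow> W = 0\<^sub>v k"
      proof (intro ballI impI)
        fix W :: "'a vec" assume Wc: "W \<in> carrier_vec k" and AW: "A *\<^sub>v W = 0\<^sub>v n"
        have z: "W $ (offs ks i + t) = 0" if i: "i < l" and t: "t < ks i" for i t
        proof -
          define w where "w = vec (ks i) (\<lambda>t. W $ (offs ks i + t))"
          have Bi: "B i \<in> carrier_mat (nn i) (ks i)" using Bc i by simp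
          have "B i *\<^sub>v w = 0\<^sub>v (nn i)"
          proof (rule eq_vecI)
            fix r assume "r < dim_vec (0\<^sub>v (nn i) :: 'a vec)"
            then have r: "r < nn i" by simp
            have "(B i *\<^sub>v w) $ r = (\<Sum>t<ks i. B i $$ (r,t) * W $ (offs ks i + t))"
              using Bi r by (simp add: w_def scalar_prod_def atLeast0LessThan)
            also have "\<dots> = (A *\<^sub>v W) $ (offs nn i + r)"
              unfolding A_def using bd_mult_vec[of i l r nn W ks B, OF i r] Wc kl by simp
            also have "\<dots> = 0" using AW offs_lt[of i l r nn, OF i r] nl by simp
            finally show "(B i *\<^sub>v w) $ r = 0\<^sub>v (nn i) $ r" using r by simp
          qed (use Bi in simp)
          moreover have "w \<in> carrier_vec (ks i)" by (simp add: w_def)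
          ultimately have "w = 0\<^sub>v (ks i)" using Bind[OF i] by blast
          then show ?thesis using t unfolding w_def by (metis index_vec index_zero_vec(1))
        qed
        show "W = 0\<^sub>v k"
        proof (rule eq_vecI)
          fix s assume "s < dim_vec (0\<^sub>v k :: 'a vec)"
          then have "s < offs ks l" using kl by simp
          then obtain i t where "i < l" "t < ks i" "s = offs ks i + t" using offs_decomp by blast
          then show "W $ s = 0\<^sub>v k $ s" using z \<open>s < offs ks l\<close> kl by simp
        qed (use Wc in simp)
      qed
      have rkA: "vec_space.rank n A = k" using rank_iff_ker[OF Ac] Aker by blast
      have "(\<forall>i<l. ks i \<le> nn i \<and> B i \<in> carrier_mat (nn i) (ks i) \<and>
                    (\<forall>r<nn i. \<forall>c<ks i. B i $$ (r, c) \<in> K i))"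
        using ks(1) Bc BK by fastforce
      then have inv: "invertible_mat (G * A)" using INV[rule_format, of ks B] ks(2) rkA unfolding A_def by blast
      have Atc: "transpose_mat A *\<^sub>v c = 0\<^sub>v k"
      proof (rule eq_vecI)
        fix s assume "s < dim_vec (0\<^sub>v k :: 'a vec)"
        then have "s < offs ks l" using kl by simp
        then obtain i t where it: "i < l" "t < ks i" "s = offs ks i + t" using offs_decomp by blast
        have "(transpose_mat A *\<^sub>v c) $ s = (\<Sum>r<nn i. B i $$ (r,t) * c $ (offs nn i + r))"
          unfolding A_def it(3) using bd_tmult_vec[of i l t ks c nn B, OF it(1,2)] cc nl by simp
        also have "\<dots> = 0" using Bker it by simp
        finally show "(transpose_mat A *\<^sub>v c) $ s = 0\<^sub>v k $ s" using \<open>s < offs ks l\<close> kl by simp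
      qed (use Ac in simp)
      have "transpose_mat (G * A) *\<^sub>v x = transpose_mat A *\<^sub>v c"
        using transpose_mult[OF G Ac] G Ac x by simp
      then have "transpose_mat (G * A) *\<^sub>v x = 0\<^sub>v k" using Atc by simp
      then have "x = 0\<^sub>v k" using inv_ker[OF GAc inv x(1)] by simp
      then show False using xnz by simp
    qed
  qed
qed


end
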